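(* Let $\mathbf{F}$ be a field of characteristic $3$, let $\lambda=(\lambda_1,\lambda_2)$ be a partition and let $u\in\mathbf{N}$ satisfy $3^u\le\lambda_2$. Then the $\mathbf{F}$-span of $\{b(k):0\le k<3^u\}$ is a subalgebra of $S_\mathbf{F}(\lambda)$.
   Context: $S_\mathbf{F}(\lambda)=\operatorname{End}_{\mathbf{F}S_r}(M^\lambda)$ ($M^\lambda$ the permutation module on cosets of $S_{\lambda_1}\times S_{\lambda_2}$) is a commutative $\mathbf{F}$-algebra with basis $b(0)=\mathbf{1},b(1),\dots,b(\lambda_2)$ and multiplication $b(i)b(j)=\sum_{h=\max\{i,j\}}^{i+j}\binom{h}{i}\binom{h}{j}\binom{m+i+j}{i+j-h}b(h)$, where $m=\lambda_1-\lambda_2$ and $b(a)=0$ for $a>\lambda_2$. *)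

theory Defs
  imports Main
begin

text \<open>Model of the algebra S_F(lambda), lambda = (l1,l2), l1 >= l2, in coordinates with
  respect to the basis b(0),...,b(l2): an element is a function v :: nat => F with
  v k = 0 for k > l2 (v k is the coefficient of b(k)).\<close>

definition schur_coef :: "nat \<Rightarrow> nat \<Rightarrow> nat \<Rightarrow> nat \<Rightarrow> nat" where
  "schur_coef m i j h =
     (if max i j \<le> h \<and> h \<le> i + j
      then (h choose i) * (h choose j) * ((m + i + j) choose (i + j - h)) else 0)"

definition schur_carrier :: "nat \<Rightarrow> (nat \<Rightarrow> 'a::field) set" where
  "schur_carrier l2 = {v. \<forall>k>l2. v k = 0}"

definition schur_b :: "nat \<Rightarrow> nat \<Rightarrow> (nat \<Rightarrow> 'a::field)" where
  "schur_b l2 a = (\<lambda>k. if k = a \<and> a \<le> l2 then 1 else 0)"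

definition schur_mult :: "nat \<Rightarrow> nat \<Rightarrow> (nat \<Rightarrow> 'a::field) \<Rightarrow> (nat \<Rightarrow> 'a) \<Rightarrow> (nat \<Rightarrow> 'a)" where
  "schur_mult l1 l2 v w =
     (\<lambda>h. if h \<le> l2
          then (\<Sum>i\<le>l2. \<Sum>j\<le>l2. v i * w j * of_nat (schur_coef (l1 - l2) i j h))
          else 0)"

definition lin_span :: "(nat \<Rightarrow> 'a::field) set \<Rightarrow> (nat \<Rightarrow> 'a) set" where
  "lin_span V = {v. \<exists>A c. finite A \<and> A \<subseteq> V \<and> v = (\<lambda>k. \<Sum>x\<in>A. c x * x k)}"

definition schur_subalgebra :: "nat \<Rightarrow> nat \<Rightarrow> (nat \<Rightarrow> 'a::field) set \<Rightarrow> bool" where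
  "schur_subalgebra l1 l2 W \<longleftrightarrow>
     W \<subseteq> schur_carrier l2 \<and>
     schur_b l2 0 \<in> W \<and>
     (\<forall>v\<in>W. \<forall>w\<in>W. (\<lambda>k. v k + w k) \<in> W) \<and>
     (\<forall>c. \<forall>v\<in>W. (\<lambda>k. c * v k) \<in> W) \<and>
     (\<forall>v\<in>W. \<forall>w\<in>W. schur_mult l1 l2 v w \<in> W)"

end

theory Submission
  imports Defs "HOL-Computational_Algebra.Primes"
begin

lemma three_dvd_choose_pow:
  assumes "0 < k" "k < 3 ^ u"
  shows "(3::nat) dvd (3 ^ u choose k)"
proof (rule ccontr)
  assume nd: "\<not> (3::nat) dvd (3 ^ u choose k)"
  have "coprime (3::nat) (3 ^ u choose k)"
    using nd by (simp add: prime_imp_coprime)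
  hence cp: "coprime ((3::nat) ^ u) (3 ^ u choose k)" by simp
  obtain k' where k': "k = Suc k'" using assms(1) by (cases k) auto
  have "k * (3 ^ u choose k) = 3 ^ u * ((3 ^ u - 1) choose (k - 1))"
  proof -
    have "(3::nat) ^ u > 0" by simp
    then obtain n where n: "(3::nat) ^ u = Suc n" by (cases "(3::nat)^u") auto
    have "Suc n * (n choose k') = (Suc n choose Suc k') * Suc k'" by (rule Suc_times_binomial_eq)
    then show ?thesis using k' n by (simp add: mult.commute)
  qed
  hence "(3::nat) ^ u dvd k * (3 ^ u choose k)" by simp
  hence "(3::nat) ^ u dvd k" using cp by (simp add: coprime_dvd_mult_left_iff)
  with assms show False using nat_dvd_not_less by blast
qed

lemma three_dvd_choose:
  assumes "3 ^ u \<le> h" "i < 3 ^ u" "h - 3 ^ u < i"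
  shows "(3::nat) dvd (h choose i)"
proof -
  have "h choose i = (\<Sum>k\<le>i. (3 ^ u choose k) * ((h - 3 ^ u) choose (i - k)))"
    using vandermonde[of "3^u" "h - 3^u" i] assms(1) by simp
  also have "3 dvd \<dots>"
  proof (rule dvd_sum)
    fix k assume k: "k \<in> {..i}"
    show "3 dvd (3 ^ u choose k) * ((h - 3 ^ u) choose (i - k))"
    proof (cases "k = 0")
      case True
      then show ?thesis using assms by (simp add: binomial_eq_0)
    next
      case False
      then show ?thesis using k assms three_dvd_choose_pow[of k u] by auto
    qed
  qed
  finally show ?thesis .
qed

lemma span_eq:
  assumes "3 ^ u \<le> l2"
  shows "lin_span {schur_b l2 k :: nat \<Rightarrow> 'a::field | k. k < 3 ^ u} = {v. \<forall>k\<ge>3^u. v k = 0}"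
proof
  show "lin_span {schur_b l2 k :: nat \<Rightarrow> 'a::field | k. k < 3 ^ u} \<subseteq> {v. \<forall>k\<ge>3^u. v k = 0}"
  proof
    fix v :: "nat \<Rightarrow> 'a" assume "v \<in> lin_span {schur_b l2 k | k. k < 3 ^ u}"
    then obtain A c where A: "finite A" "A \<subseteq> {schur_b l2 k | k. k < 3 ^ u}"
      and v: "v = (\<lambda>k. \<Sum>x\<in>A. c x * x k)" unfolding lin_span_def by blast
    show "v \<in> {v. \<forall>k\<ge>3^u. v k = 0}"
    proof (clarsimp)
      fix k :: nat assume k: "3 ^ u \<le> k"
      have "\<forall>x\<in>A. x k = 0"
      proof
        fix x assume "x \<in> A"
        then obtain j where "j < 3 ^ u" "x = schur_b l2 j" using A by blast
        then show "x k = 0" using k by (auto simp: schur_b_def)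
      qed
      then show "v k = 0" by (simp add: v sum.neutral)
    qed
  qed
next
  show "{v. \<forall>k\<ge>3^u. v k = 0} \<subseteq> lin_span {schur_b l2 k :: nat \<Rightarrow> 'a::field | k. k < 3 ^ u}"
  proof
    fix v :: "nat \<Rightarrow> 'a" assume v: "v \<in> {v. \<forall>k\<ge>3^u. v k = 0}"
    let ?B = "schur_b l2 :: nat \<Rightarrow> nat \<Rightarrow> 'a"
    have inj: "inj_on ?B {..<3^u}"
    proof (rule inj_onI)
      fix x y assume xy: "x \<in> {..<3^u}" "y \<in> {..<3^u}" "?B x = ?B y"
      hence "?B x x = ?B y x" by simp
      thus "x = y" using xy assms by (auto simp: schur_b_def split: if_splits)
    qed
    define c where "c x = v (inv_into {..<3^u} ?B x)" for x
    have "v = (\<lambda>k. \<Sum>x\<in>?B ` {..<3^u}. c x * x k)"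
    proof
      fix k
      have "(\<Sum>x\<in>?B ` {..<3^u}. c x * x k) = (\<Sum>j<3^u. c (?B j) * ?B j k)"
        by (subst sum.reindex[OF inj]) simp
      also have "\<dots> = (\<Sum>j<3^u. v j * ?B j k)"
        using inj by (intro sum.cong) (auto simp: c_def)
      also have "\<dots> = (\<Sum>j<3^u. if j = k then v j else 0)"
        using assms by (intro sum.cong) (auto simp: schur_b_def)
      also have "\<dots> = v k" using v by (auto simp: sum.delta)
      finally show "v k = (\<Sum>x\<in>?B ` {..<3^u}. c x * x k)" by simp
    qed
    moreover have "?B ` {..<3^u} \<subseteq> {schur_b l2 k | k. k < 3 ^ u}" by auto
    ultimately show "v \<in> lin_span {schur_b l2 k :: nat \<Rightarrow> 'a::field | k. k < 3 ^ u}"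
      unfolding lin_span_def by blast
  qed
qed

theorem lemma3p2:
  fixes l1 l2 u :: nat
  assumes "CHAR('a::field) = 3"
    and "l2 \<le> l1"
    and "3 ^ u \<le> l2"
  shows "schur_subalgebra l1 l2 (lin_span {schur_b l2 k :: nat \<Rightarrow> 'a | k. k < 3 ^ u})"
proof -
  have coef0: "(of_nat (schur_coef m i j h) :: 'a) = 0"
    if "i < 3^u" "j < 3^u" "3^u \<le> h" for m i j h
  proof (cases "max i j \<le> h \<and> h \<le> i + j")
    case True
    have "(3::nat) dvd (h choose i)"
      using three_dvd_choose[of u h i] that True by auto
    have eq: "schur_coef m i j h = (h choose i) * ((h choose j) * ((m+i+j) choose (i+j-h)))"
      using True by (simp add: schur_coef_def mult.assoc)
    have "(3::nat) dvd schur_coef m i j h" unfolding eq using \<open>3 dvd (h choose i)\<close> by (rule dvd_mult2)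
    then show ?thesis using assms(1) of_nat_eq_0_iff_char_dvd by metis
  next
    case False
    then have "schur_coef m i j h = 0" unfolding schur_coef_def by (simp only: if_False)
    then show ?thesis by simp
  qed
  show ?thesis
    unfolding span_eq[OF assms(3)] schur_subalgebra_def
  proof (intro conjI ballI allI)
    show "{v. \<forall>k\<ge>3 ^ u. v k = 0} \<subseteq> (schur_carrier l2 :: (nat \<Rightarrow> 'a) set)"
      using assms(3) by (auto simp: schur_carrier_def)
    show "schur_b l2 0 \<in> {v :: nat \<Rightarrow> 'a. \<forall>k\<ge>3 ^ u. v k = 0}"
      by (auto simp: schur_b_def)
  next
    fix v w :: "nat \<Rightarrow> 'a" assume v: "v \<in> {v. \<forall>k\<ge>3 ^ u. v k = 0}"
      and w: "w \<in> {v. \<forall>k\<ge>3 ^ u. v k = 0}"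
    show "(\<lambda>k. v k + w k) \<in> {v. \<forall>k\<ge>3 ^ u. v k = 0}" using v w by auto
    show "schur_mult l1 l2 v w \<in> {v. \<forall>k\<ge>3 ^ u. v k = 0}"
    proof (clarsimp simp: schur_mult_def)
      fix h assume h: "3 ^ u \<le> h" "h \<le> l2"
      show "(\<Sum>i\<le>l2. \<Sum>j\<le>l2. v i * w j * of_nat (schur_coef (l1 - l2) i j h)) = 0"
      proof (intro sum.neutral ballI)
        fix i j
        show "v i * w j * of_nat (schur_coef (l1 - l2) i j h) = 0"
        proof (cases "i < 3^u \<and> j < 3^u")
          case True then show ?thesis using coef0 h by simp
        next
          case False then show ?thesis using v w by auto
        qed
      qed
    qed
  next
    fix c :: 'a and v assume v: "v \<in> {v :: nat \<Rightarrow> 'a. \<forall>k\<ge>3 ^ u. v k = 0}"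
    show "(\<lambda>k. c * v k) \<in> {v. \<forall>k\<ge>3 ^ u. v k = 0}" using v by auto
  qed
qed

end
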